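(* (B case) Let $d\ge1$, $n\ge d$, and let $(\xi_1,\dots,\xi_n)$ be random vectors in $\mathbb{R}^d$ with $(\xi_1,\dots,\xi_n)\stackrel{d}{=}(\varepsilon_1\xi_{\sigma(1)},\dots,\varepsilon_n\xi_{\sigma(n)})$ for all permutations $\sigma$ and all $\varepsilon\in\{-1,1\}^n$, such that any $d$ vectors among $S_1,\dots,S_n$ are linearly independent a.s. Then $\ker A$ a.s. has codimension $d$ in $\mathbb{R}^n$ and a.s. is in general position w.r.t. $\mathcal{A}(B_n)$. (D case) Let $d\ge1$, $n\ge\max\{2,d\}$, and let $(\xi_1,\dots,\xi_n)$ be random vectors in $\mathbb{R}^d$ with the same distributional invariance but only for signs with $\varepsilon_1\cdots\varepsilon_n=1$, such that any $d$ vectors from either collection $S_1,\dots,S_n$ or $S_1,\dots,S_{n-1},S_n^*$ are linearly independent a.s. Then $\ker A$ a.s. has codimension $d$ in $\mathbb{R}^n$ and a.s. is in general position w.r.t. $\mathcal{A}(D_n)$.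
   Context: $S_k=\xi_1+\dots+\xi_k$, $S_n^*=S_{n-1}-\xi_n$, and $A$ is the $d\times n$ matrix with columns $\xi_1,\dots,\xi_n$, viewed as a linear map $\mathbb{R}^n\to\mathbb{R}^d$. $\mathcal{A}(B_n)$ consists of the hyperplanes $x_i=x_j$, $x_i=-x_j$ ($1\le i<j\le n$) and $x_k=0$ ($1\le k\le n$) in $\mathbb{R}^n$; $\mathcal{A}(D_n)$ of the hyperplanes $x_i=x_j$, $x_i=-x_j$ ($1\le i<j\le n$). For an arrangement $\mathcal{A}$ and $\mathcal{B}\subset\mathcal{A}$, $\mathrm{rank}(\mathcal{B})=n-\dim\bigcap_{H\in\mathcal{B}}H$. A linear subspace $M$ of $\mathbb{R}^n$ of codimension $m$ is in general position w.r.t. $\mathcal{A}$ if for every nonempty $\mathcal{B}\subset\mathcal{A}$, $\dim\bigcap_{H\in\mathcal{B}}(H\cap M)$ equals $n-m-\mathrm{rank}(\mathcal{B})$ if $\mathrm{rank}(\mathcal{B})\le n-m$ and $0$ if $\mathrm{rank}(\mathcal{B})\ge n-m$. *)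

theory Defs
  imports "HOL-Analysis.Analysis" "HOL-Probability.Probability" "HOL-Library.Function_Algebras"
begin

definition Rn :: "nat \<Rightarrow> (nat \<Rightarrow> real) set" where
  "Rn n = {x. \<forall>i. i \<notin> {1..n} \<longrightarrow> x i = 0}"

definition vdim :: "(nat \<Rightarrow> real) set \<Rightarrow> nat" where
  "vdim L = vector_space.dim (\<lambda>(c::real) (x::nat \<Rightarrow> real). (\<lambda>i. c * x i)) L"

definition is_subspace :: "(nat \<Rightarrow> real) set \<Rightarrow> bool" where
  "is_subspace L \<longleftrightarrow> 0 \<in> L \<and> (\<forall>x\<in>L. \<forall>y\<in>L. x + y \<in> L) \<and> (\<forall>c::real. \<forall>x\<in>L. (\<lambda>i. c * x i) \<in> L)"

definition arr_D :: "nat \<Rightarrow> (nat \<Rightarrow> real) set set" where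
  "arr_D n = {Rn n \<inter> {x. x i = x j} | i j. 1 \<le> i \<and> i < j \<and> j \<le> n}
           \<union> {Rn n \<inter> {x. x i = - x j} | i j. 1 \<le> i \<and> i < j \<and> j \<le> n}"

definition arr_B :: "nat \<Rightarrow> (nat \<Rightarrow> real) set set" where
  "arr_B n = arr_D n \<union> {Rn n \<inter> {x. x k = 0} | k. 1 \<le> k \<and> k \<le> n}"

definition arr_rank :: "nat \<Rightarrow> (nat \<Rightarrow> real) set set \<Rightarrow> nat" where
  "arr_rank n B = n - vdim (\<Inter>B)"

definition general_position :: "nat \<Rightarrow> (nat \<Rightarrow> real) set set \<Rightarrow> (nat \<Rightarrow> real) set \<Rightarrow> bool" where
  "general_position n Arr M \<longleftrightarrow> M \<subseteq> Rn n \<and> is_subspace M \<and>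
     (let m = n - vdim M in
      \<forall>B. B \<subseteq> Arr \<and> B \<noteq> {} \<longrightarrow>
        vdim (\<Inter>H\<in>B. H \<inter> M) =
          (if arr_rank n B \<le> n - m then n - m - arr_rank n B else 0))"

definition ker_A :: "nat \<Rightarrow> (nat \<Rightarrow> 'a \<Rightarrow> real^'d) \<Rightarrow> 'a \<Rightarrow> (nat \<Rightarrow> real) set" where
  "ker_A n \<xi> \<omega> = {x \<in> Rn n. (\<Sum>i\<in>{1..n}. x i *\<^sub>R \<xi> i \<omega>) = 0}"

definition psum :: "(nat \<Rightarrow> 'a \<Rightarrow> real^'d) \<Rightarrow> nat \<Rightarrow> 'a \<Rightarrow> real^'d" where
  "psum \<xi> k \<omega> = (\<Sum>i\<in>{1..k}. \<xi> i \<omega>)"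

definition psum_star :: "nat \<Rightarrow> (nat \<Rightarrow> 'a \<Rightarrow> real^'d) \<Rightarrow> nat \<Rightarrow> 'a \<Rightarrow> real^'d" where
  "psum_star n \<xi> k \<omega> = (if k = n then psum \<xi> (n - 1) \<omega> - \<xi> n \<omega> else psum \<xi> k \<omega>)"

definition law_invariant ::
  "'a measure \<Rightarrow> nat \<Rightarrow> (nat \<Rightarrow> 'a \<Rightarrow> real^'d) \<Rightarrow> ((nat \<Rightarrow> real) \<Rightarrow> bool) \<Rightarrow> bool" where
  "law_invariant M n \<xi> E \<longleftrightarrow>
     (\<forall>\<sigma> \<epsilon>. \<sigma> permutes {1..n} \<and> \<epsilon> \<in> {1..n} \<rightarrow> {-1, 1} \<and> E \<epsilon> \<longrightarrow>
        distr M (PiM {1..n} (\<lambda>_. borel)) (\<lambda>\<omega>. \<lambda>i\<in>{1..n}. \<xi> i \<omega>) =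
        distr M (PiM {1..n} (\<lambda>_. borel)) (\<lambda>\<omega>. \<lambda>i\<in>{1..n}. \<epsilon> i *\<^sub>R \<xi> (\<sigma> i) \<omega>))"

definition any_d_indep :: "'a measure \<Rightarrow> nat \<Rightarrow> (nat \<Rightarrow> 'a \<Rightarrow> real^'d) \<Rightarrow> bool" where
  "any_d_indep M n v \<longleftrightarrow>
     (\<forall>I. I \<subseteq> {1..n} \<and> card I = CARD('d) \<longrightarrow>
        (AE \<omega> in M. inj_on (\<lambda>k. v k \<omega>) I \<and> independent ((\<lambda>k. v k \<omega>) ` I)))"

end

theory Submission
  imports Defs
begin

instantiation "fun" :: (type, real_vector) real_vector
begin
definition scaleR_fun :: "real \<Rightarrow> ('a \<Rightarrow> 'b) \<Rightarrow> 'a \<Rightarrow> 'b" where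
  "scaleR_fun c f = (\<lambda>x. c *\<^sub>R f x)"
instance
  by standard (auto simp: scaleR_fun_def fun_eq_iff scaleR_add_right scaleR_add_left)
end

lemma scale_fun_eq: "(\<lambda>(c::real) (x::nat \<Rightarrow> real). (\<lambda>i. c * x i)) = scaleR"
  by (auto simp: fun_eq_iff scaleR_fun_def)

lemma vdim_eq: "vdim L = dim L"
  unfolding vdim_def scale_fun_eq dim_raw_def by (rule refl)


lemma indep_fin:
  fixes B :: "'a::real_vector set"
  assumes "finite B"
  shows "independent B \<longleftrightarrow> (\<forall>c. (\<Sum>v\<in>B. c v *\<^sub>R v) = 0 \<longrightarrow> (\<forall>v\<in>B. c v = 0))"
  using dependent_finite[OF assms] by auto

lemma indep_family_set:
  fixes u :: "'i \<Rightarrow> 'v::real_vector"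
  assumes fin: "finite I"
  shows "(\<forall>c. (\<Sum>i\<in>I. c i *\<^sub>R u i) = 0 \<longrightarrow> (\<forall>i\<in>I. c i = 0)) \<longleftrightarrow> (inj_on u I \<and> independent (u ` I))"
proof
  assume H: "\<forall>c. (\<Sum>i\<in>I. c i *\<^sub>R u i) = 0 \<longrightarrow> (\<forall>i\<in>I. c i = 0)"
  have inj: "inj_on u I"
  proof (rule inj_onI, rule ccontr)
    fix i j assume ij: "i \<in> I" "j \<in> I" "u i = u j" "i \<noteq> j"
    define c where "c = (\<lambda>k. if k = i then (1::real) else if k = j then -1 else 0)"
    have "(\<Sum>k\<in>I. c k *\<^sub>R u k) = (\<Sum>k\<in>{i,j}. c k *\<^sub>R u k)"
      by (rule sum.mono_neutral_right) (use fin ij in \<open>auto simp: c_def\<close>)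
    also have "\<dots> = 0" using ij by (simp add: c_def)
    finally have "c i = 0" using H ij by blast
    then show False by (simp add: c_def)
  qed
  moreover have "finite (u ` I) \<and> (\<forall>c. (\<Sum>v\<in>u ` I. c v *\<^sub>R v) = 0 \<longrightarrow> (\<forall>v\<in>u ` I. c v = 0))"
  proof (intro conjI allI impI ballI)
    show "finite (u ` I)" using fin by simp
    fix c v assume s: "(\<Sum>v\<in>u ` I. c v *\<^sub>R v) = 0" and v: "v \<in> u ` I"
    have "(\<Sum>i\<in>I. c (u i) *\<^sub>R u i) = 0" using s by (simp add: sum.reindex[OF inj])
    then have "\<forall>i\<in>I. c (u i) = 0" using H[rule_format, of "\<lambda>i. c (u i)"] by blast
    then show "c v = 0" using v by blast
  qed
  ultimately show "inj_on u I \<and> independent (u ` I)" using indep_fin[of "u ` I"] by blast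
next
  assume H: "inj_on u I \<and> independent (u ` I)"
  show "\<forall>c. (\<Sum>i\<in>I. c i *\<^sub>R u i) = 0 \<longrightarrow> (\<forall>i\<in>I. c i = 0)"
  proof (intro allI impI ballI)
    fix c i assume s: "(\<Sum>i\<in>I. c i *\<^sub>R u i) = 0" and i: "i \<in> I"
    let ?c = "\<lambda>v. c (the_inv_into I u v)"
    have "(\<Sum>v\<in>u ` I. ?c v *\<^sub>R v) = (\<Sum>i\<in>I. ?c (u i) *\<^sub>R u i)"
      using H by (simp add: sum.reindex)
    also have "\<dots> = (\<Sum>i\<in>I. c i *\<^sub>R u i)"
      using H by (intro sum.cong) (auto simp: the_inv_into_f_f)
    finally have "(\<Sum>v\<in>u ` I. ?c v *\<^sub>R v) = 0" using s by simp
    moreover have "\<forall>c. (\<Sum>v\<in>u ` I. c v *\<^sub>R v) = 0 \<longrightarrow> (\<forall>v\<in>u ` I. c v = 0)"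
      using H indep_fin[of "u ` I"] fin by blast
    ultimately have "?c (u i) = 0" using i by (metis image_eqI)
    then show "c i = 0" using H i by (simp add: the_inv_into_f_f)
  qed
qed

lemma rank_nullity_gen:
  fixes f :: "'a::real_vector \<Rightarrow> 'b::real_vector"
  assumes lf: "linear f" and S: "subspace S" and F: "finite F" "S \<subseteq> span F"
  shows "dim S = dim {x\<in>S. f x = 0} + dim (f ` S)"
proof -
  obtain K where K: "K \<subseteq> {x\<in>S. f x = 0}" "independent K" "{x\<in>S. f x = 0} \<subseteq> span K"
    "card K = dim {x\<in>S. f x = 0}"
    using basis_exists by blast
  obtain B where B: "K \<subseteq> B" "B \<subseteq> S" "independent B" "S \<subseteq> span B"
    using maximal_independent_subset_extend[of K S] K by auto
  have finB: "finite B" using independent_span_bound[OF F(1) B(3)] B(2) F(2) by auto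
  have SB: "span B = S" using span_subspace[OF B(2) B(4) S] .
  have "span S = S" using S by simp
  then have dS: "dim S = card B" by (metis SB B(3) dim_eq_card)
  have finK: "finite K" using finB B(1) finite_subset by blast
  have comb: "\<forall>c. (\<Sum>b\<in>B-K. c b *\<^sub>R f b) = 0 \<longrightarrow> (\<forall>b\<in>B-K. c b = 0)"
  proof (intro allI impI)
    fix c assume s: "(\<Sum>b\<in>B-K. c b *\<^sub>R f b) = 0"
    define x where "x = (\<Sum>b\<in>B-K. c b *\<^sub>R b)"
    have fx: "f x = 0" using s unfolding x_def by (simp add: linear_sum[OF lf] linear_scale[OF lf])
    have "x \<in> span B" unfolding x_def by (intro span_sum span_scale span_base) auto
    then have "x \<in> {x\<in>S. f x = 0}" using SB fx by auto
    then have "x \<in> span K" using K(3) by blast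
    then obtain e where e: "x = (\<Sum>k\<in>K. e k *\<^sub>R k)" using span_finite[OF finK] by auto
    define g where "g = (\<lambda>b. if b \<in> K then - e b else c b)"
    have "(\<Sum>b\<in>B. g b *\<^sub>R b) = (\<Sum>b\<in>B-K. g b *\<^sub>R b) + (\<Sum>b\<in>K. g b *\<^sub>R b)"
      using sum.subset_diff[OF B(1) finB] by simp
    also have "\<dots> = x - (\<Sum>k\<in>K. e k *\<^sub>R k)"
      unfolding x_def g_def by (simp add: sum_negf)
    also have "\<dots> = 0" using e by simp
    finally have "(\<Sum>b\<in>B. g b *\<^sub>R b) = 0" .
    moreover have "\<forall>c. (\<Sum>v\<in>B. c v *\<^sub>R v) = 0 \<longrightarrow> (\<forall>v\<in>B. c v = 0)"
      using B(3) finB by (simp add: indep_fin)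
    ultimately have "\<forall>b\<in>B. g b = 0" by blast
    then show "\<forall>b\<in>B-K. c b = 0" unfolding g_def by auto
  qed
  then have IK: "inj_on f (B-K)" "independent (f ` (B-K))"
    using indep_family_set[of "B-K" f] finB by auto
  have "f ` S = span (f ` B)" using SB lf by (metis span_linear_image)
  also have "\<dots> = span (f ` (B-K))"
  proof -
    have "f ` B \<subseteq> span (f ` (B-K))"
    proof
      fix y assume "y \<in> f ` B"
      then obtain b where b: "b \<in> B" "y = f b" by blast
      show "y \<in> span (f ` (B-K))"
      proof (cases "b \<in> K")
        case True then have "y = 0" using K(1) b by auto
        then show ?thesis by (simp add: span_zero)
      next
        case False then show ?thesis using b by (intro span_base) auto
      qed
    qed
    moreover have "f ` (B-K) \<subseteq> span (f ` B)" by (intro subset_trans[OF _ span_superset]) auto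
    ultimately show ?thesis by (simp add: span_eq)
  qed
  finally have "dim (f ` S) = card (f ` (B-K))"
    by (metis IK(2) dim_span dim_eq_card_independent)
  also have "\<dots> = card (B-K)" using IK(1) by (simp add: card_image)
  finally have "dim (f ` S) = card B - card K" using finK B(1) by (simp add: card_Diff_subset)
  moreover have "card K \<le> card B" using B(1) finB by (simp add: card_mono)
  ultimately show ?thesis using dS K(4) by simp
qed


lemma fun_sum_apply: "(\<Sum>r\<in>R. f r) (i::'a) = (\<Sum>r\<in>R. f r i :: 'b::comm_monoid_add)"
  by (induction R rule: infinite_finite_induct) (auto simp: plus_fun_def zero_fun_def)

lemma fun_scaleR_apply: "(c *\<^sub>R f) i = c *\<^sub>R f i"
  by (simp add: scaleR_fun_def)

definition NZ :: "(nat \<Rightarrow> real) set \<Rightarrow> nat set" where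
  "NZ L = {i. \<exists>y\<in>L. y i \<noteq> 0}"
definition relL :: "(nat \<Rightarrow> real) set \<Rightarrow> nat \<Rightarrow> nat \<Rightarrow> bool" where
  "relL L i j \<longleftrightarrow> (\<exists>s\<in>{1,-1::real}. \<forall>y\<in>L. y i = s * y j)"
definition repL :: "(nat \<Rightarrow> real) set \<Rightarrow> nat \<Rightarrow> nat" where
  "repL L i = (LEAST j. j \<in> NZ L \<and> relL L i j)"
definition sgL :: "(nat \<Rightarrow> real) set \<Rightarrow> nat \<Rightarrow> real" where
  "sgL L i = (SOME s. s \<in> {1,-1::real} \<and> (\<forall>y\<in>L. y i = s * y (repL L i)))"
definition vbL :: "(nat \<Rightarrow> real) set \<Rightarrow> nat \<Rightarrow> nat \<Rightarrow> real" where
  "vbL L r = (\<lambda>i. if i \<in> NZ L \<and> repL L i = r then sgL L i else 0)"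
definition closedL :: "nat \<Rightarrow> (nat \<Rightarrow> real) set \<Rightarrow> bool" where
  "closedL n L \<longleftrightarrow> (\<forall>x\<in>Rn n. (\<forall>i. (\<forall>y\<in>L. y i = 0) \<longrightarrow> x i = 0) \<and>
      (\<forall>i j. \<forall>s\<in>{1,-1::real}. (\<forall>y\<in>L. y i = s * y j) \<longrightarrow> x i = s * x j) \<longrightarrow> x \<in> L)"

lemma NZ_sub: assumes "L \<subseteq> Rn n" shows "NZ L \<subseteq> {1..n}"
proof
  fix i assume "i \<in> NZ L"
  then obtain y where y: "y \<in> L" "y i \<noteq> 0" unfolding NZ_def by blast
  then have "y \<in> Rn n" using assms by blast
  then show "i \<in> {1..n}" using y(2) unfolding Rn_def by blast
qed

lemma relL_refl: "relL L i i"
  unfolding relL_def by (intro bexI[of _ 1]) auto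

lemma relL_sym: "relL L i j \<Longrightarrow> relL L j i"
  unfolding relL_def by (auto intro: bexI[of _ 1] bexI[of _ "-1"])

lemma relL_trans: assumes "relL L i j" "relL L j k" shows "relL L i k"
proof -
  obtain s1 where s1: "s1 \<in> {1,-1::real}" "\<forall>y\<in>L. y i = s1 * y j" using assms(1) unfolding relL_def by blast
  obtain s2 where s2: "s2 \<in> {1,-1::real}" "\<forall>y\<in>L. y j = s2 * y k" using assms(2) unfolding relL_def by blast
  have "s1 * s2 \<in> {1,-1}" using s1(1) s2(1) by auto
  moreover have "\<forall>y\<in>L. y i = (s1 * s2) * y k" using s1(2) s2(2) by (simp add: mult.assoc)
  ultimately show ?thesis unfolding relL_def by blast
qed

lemma relL_NZ: assumes "relL L i j" "i \<in> NZ L" shows "j \<in> NZ L"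
proof -
  obtain s where s: "\<forall>y\<in>L. y i = s * y j" using assms(1) unfolding relL_def by blast
  obtain y where y: "y \<in> L" "y i \<noteq> 0" using assms(2) unfolding NZ_def by blast
  then have "y j \<noteq> 0" using s by auto
  then show ?thesis using y(1) unfolding NZ_def by blast
qed

lemma repL_props:
  assumes "i \<in> NZ L"
  shows "repL L i \<in> NZ L" "relL L i (repL L i)" "repL L i \<le> i"
proof -
  have "i \<in> NZ L \<and> relL L i i" using assms relL_refl by blast
  then show "repL L i \<in> NZ L" "relL L i (repL L i)" "repL L i \<le> i"
    unfolding repL_def by (metis (mono_tags, lifting) LeastI Least_le)+
qed

lemma repL_eq:
  assumes "relL L i j"
  shows "repL L i = repL L j"
proof -
  have "(\<lambda>k. k \<in> NZ L \<and> relL L i k) = (\<lambda>k. k \<in> NZ L \<and> relL L j k)"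
    using assms by (auto intro: relL_trans relL_sym)
  then show ?thesis unfolding repL_def by simp
qed

lemma repL_idem: "i \<in> NZ L \<Longrightarrow> repL L (repL L i) = repL L i"
  using repL_eq[of L i "repL L i"] repL_props(2)[of i L] relL_sym by metis

lemma sgL_props:
  assumes "i \<in> NZ L"
  shows "sgL L i \<in> {1,-1}" "\<forall>y\<in>L. y i = sgL L i * y (repL L i)"
proof -
  have "\<exists>s. s \<in> {1,-1::real} \<and> (\<forall>y\<in>L. y i = s * y (repL L i))"
    using repL_props(2)[OF assms] unfolding relL_def by blast
  from someI_ex[OF this] show "sgL L i \<in> {1,-1}" "\<forall>y\<in>L. y i = sgL L i * y (repL L i)"
    unfolding sgL_def by blast+
qed

lemma sgL_nz: "i \<in> NZ L \<Longrightarrow> sgL L i \<noteq> 0"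
  using sgL_props(1) by fastforce

locale flat =
  fixes n :: nat and L :: "(nat \<Rightarrow> real) set"
  assumes LRn: "L \<subseteq> Rn n" and Lsub: "subspace L" and Lcl: "closedL n L"
begin

abbreviation "N \<equiv> NZ L"
abbreviation "R \<equiv> repL L ` NZ L"
abbreviation "rep \<equiv> repL L"
abbreviation "sg \<equiv> sgL L"
abbreviation "vb \<equiv> vbL L"

lemma finN: "finite N" using NZ_sub[OF LRn] finite_subset by blast
lemma finR: "finite R" using finN by simp
lemma R_N: "r \<in> R \<Longrightarrow> r \<in> N" using repL_props(1) by blast
lemma R_rep: "r \<in> R \<Longrightarrow> rep r = r" using repL_idem by blast

lemma vb_Rn: "vb r \<in> Rn n"
  using NZ_sub[OF LRn] unfolding Rn_def vbL_def by auto

lemma vb_in: assumes r: "r \<in> R" shows "vb r \<in> L"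
proof -
  have rN: "r \<in> N" using R_N r .
  obtain y0 where y0: "y0 \<in> L" "y0 r \<noteq> 0" using rN unfolding NZ_def by blast
  have "(\<forall>i. (\<forall>y\<in>L. y i = 0) \<longrightarrow> vb r i = 0)"
    unfolding vbL_def NZ_def by auto
  moreover have "(\<forall>i j. \<forall>s\<in>{1,-1::real}. (\<forall>y\<in>L. y i = s * y j) \<longrightarrow> vb r i = s * vb r j)"
  proof (intro allI ballI impI)
    fix i j and s :: real assume s: "s \<in> {1,-1}" and H: "\<forall>y\<in>L. y i = s * y j"
    have rl: "relL L i j" using s H unfolding relL_def by blast
    show "vb r i = s * vb r j"
    proof (cases "i \<in> N")
      case True
      then have jN: "j \<in> N" using relL_NZ rl by blast
      have eq: "rep i = rep j" using repL_eq[OF rl] .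
      show ?thesis
      proof (cases "rep i = r")
        case True
        have "y0 i = sg i * y0 r" "y0 j = sg j * y0 r"
          using sgL_props(2)[OF \<open>i \<in> N\<close>] sgL_props(2)[OF jN] y0(1) True eq by auto
        then have "sg i * y0 r = s * (sg j * y0 r)" using H y0(1) by auto
        then have "sg i = s * sg j" using y0(2) by (simp add: mult.assoc[symmetric])
        then show ?thesis using True eq \<open>i \<in> N\<close> jN unfolding vbL_def by auto
      next
        case False then show ?thesis using eq \<open>i \<in> N\<close> jN unfolding vbL_def by auto
      qed
    next
      case False
      then have "\<forall>y\<in>L. y i = 0" unfolding NZ_def by auto
      then have "\<forall>y\<in>L. y j = 0"
      proof (intro ballI)
        fix y assume "\<forall>y\<in>L. y i = 0" "y \<in> L"
        then have "s * y j = 0" using H by metis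
        then show "y j = 0" using s by auto
      qed
      then have "j \<notin> N" unfolding NZ_def by auto
      then show ?thesis using False unfolding vbL_def by auto
    qed
  qed
  ultimately show ?thesis using Lcl vb_Rn unfolding closedL_def by blast
qed

lemma vb_apply_R: assumes "r \<in> R" shows "vb r' r = (if r' = r then sg r else 0)"
proof -
  have "r \<in> N" "rep r = r" using R_N R_rep assms by blast+
  then show ?thesis unfolding vbL_def by auto
qed

lemma L_expand: assumes x: "x \<in> L" shows "x = (\<Sum>r\<in>R. x r *\<^sub>R vb r)"
proof
  fix i
  have "(\<Sum>r\<in>R. x r *\<^sub>R vb r) i = (\<Sum>r\<in>R. x r * vb r i)"
    by (simp add: fun_sum_apply fun_scaleR_apply)
  also have "\<dots> = x i"
  proof (cases "i \<in> N")
    case True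
    have "(\<Sum>r\<in>R. x r * vb r i) = (\<Sum>r\<in>{rep i}. x r * vb r i)"
      by (rule sum.mono_neutral_right) (use finR True in \<open>auto simp: vbL_def\<close>)
    also have "\<dots> = x (rep i) * sg i" using True by (simp add: vbL_def)
    also have "\<dots> = x i" using sgL_props(2)[OF True] x by (metis mult.commute)
    finally show ?thesis .
  next
    case False
    then have "x i = 0" using x unfolding NZ_def by blast
    then show ?thesis using False by (simp add: vbL_def)
  qed
  finally show "x i = (\<Sum>r\<in>R. x r *\<^sub>R vb r) i" by simp
qed

lemma vb_indep: "inj_on vb R \<and> independent (vb ` R)"
proof -
  have "\<forall>c. (\<Sum>r\<in>R. c r *\<^sub>R vb r) = 0 \<longrightarrow> (\<forall>r\<in>R. c r = 0)"
  proof (intro allI impI ballI)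
    fix c r assume s: "(\<Sum>r\<in>R. c r *\<^sub>R vb r) = 0" and r: "r \<in> R"
    have "0 = (\<Sum>r'\<in>R. c r' *\<^sub>R vb r') r" using s by simp
    also have "\<dots> = (\<Sum>r'\<in>R. c r' * vb r' r)" by (simp add: fun_sum_apply fun_scaleR_apply)
    also have "\<dots> = (\<Sum>r'\<in>{r}. c r' * vb r' r)"
      by (rule sum.mono_neutral_right) (use finR r vb_apply_R[OF r] in auto)
    also have "\<dots> = c r * sg r" using vb_apply_R[OF r] by simp
    finally show "c r = 0" using sgL_nz[OF R_N[OF r]] by simp
  qed
  then show ?thesis using indep_family_set[OF finR, of vb] by blast
qed

lemma span_vb: "span (vb ` R) = L"
proof (rule span_subspace)
  show "vb ` R \<subseteq> L" using vb_in by blast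
  show "L \<subseteq> span (vb ` R)"
  proof
    fix x assume x: "x \<in> L"
    have "(\<Sum>r\<in>R. x r *\<^sub>R vb r) \<in> span (vb ` R)"
      by (intro span_sum span_scale span_base) auto
    then show "x \<in> span (vb ` R)" using L_expand[OF x] by simp
  qed
  show "subspace L" by (rule Lsub)
qed

lemma dim_L: "dim L = card R"
proof -
  have "dim L = card (vb ` R)" using dim_eq_card[of "vb ` R" L] span_vb vb_indep
    by (metis Lsub span_eq_iff)
  also have "\<dots> = card R" using vb_indep card_image by blast
  finally show ?thesis .
qed

end


definition rk :: "(nat \<Rightarrow> nat) \<Rightarrow> nat set \<Rightarrow> nat \<Rightarrow> nat" where
  "rk key S i = Suc (card {j\<in>S. key j < key i})"

lemma rk_mono:
  assumes "finite S" "i \<in> S" "j \<in> S" "key i < key j"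
  shows "rk key S i < rk key S j"
proof -
  have "{j'\<in>S. key j' < key i} \<subset> {j'\<in>S. key j' < key j}"
    using assms by auto
  then show ?thesis unfolding rk_def using assms(1) by (simp add: psubset_card_mono)
qed

lemma rk_inj:
  assumes "finite S" "inj_on key S"
  shows "inj_on (rk key S) S"
proof (rule inj_onI)
  fix i j assume ij: "i \<in> S" "j \<in> S" "rk key S i = rk key S j"
  show "i = j"
  proof (rule ccontr)
    assume "i \<noteq> j"
    then have "key i \<noteq> key j" using assms(2) ij by (meson inj_onD)
    then have "key i < key j \<or> key j < key i" by arith
    then show False using rk_mono[OF assms(1), of i j key] rk_mono[OF assms(1), of j i key] ij by auto
  qed
qed

lemma rk_down:
  assumes fin: "finite S" and inj: "inj_on key S" and DS: "D \<subseteq> S"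
    and down: "\<forall>u\<in>D. \<forall>j\<in>S. key j < key u \<longrightarrow> j \<in> D"
  shows "rk key S ` D = {1..card D}"
proof -
  have finD: "finite D" using fin DS finite_subset by blast
  have sub: "rk key S ` D \<subseteq> {1..card D}"
  proof
    fix p assume "p \<in> rk key S ` D"
    then obtain u where u: "u \<in> D" "p = rk key S u" by blast
    have "{j\<in>S. key j < key u} \<subseteq> D - {u}" using down u DS by auto
    then have "card {j\<in>S. key j < key u} \<le> card (D - {u})" using finD by (simp add: card_mono)
    also have "\<dots> = card D - 1" using u finD by simp
    finally have le: "card {j\<in>S. key j < key u} \<le> card D - 1" .
    have "card D > 0" using u finD card_gt_0_iff by blast
    then show "p \<in> {1..card D}" using le u unfolding rk_def by simp
  qed
  have "card (rk key S ` D) = card D"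
    using rk_inj[OF fin inj] DS by (meson card_image inj_on_subset)
  then show ?thesis using card_subset_eq[OF _ sub] by simp
qed

definition psumv :: "(nat \<Rightarrow> 'v::real_vector) \<Rightarrow> nat \<Rightarrow> 'v" where
  "psumv x t = (\<Sum>i\<in>{1..t}. x i)"
definition pstarv :: "nat \<Rightarrow> (nat \<Rightarrow> 'v::real_vector) \<Rightarrow> nat \<Rightarrow> 'v" where
  "pstarv n x t = (if t = n then psumv x (n - 1) - x n else psumv x t)"
definition Amap :: "nat \<Rightarrow> (nat \<Rightarrow> 'v::real_vector) \<Rightarrow> (nat \<Rightarrow> real) \<Rightarrow> 'v" where
  "Amap n z x = (\<Sum>i\<in>{1..n}. x i *\<^sub>R z i)"

lemma Amap_linear: "linear (Amap n z)"
proof (rule linearI)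
  fix b1 b2 :: "nat \<Rightarrow> real"
  show "Amap n z (b1 + b2) = Amap n z b1 + Amap n z b2"
    unfolding Amap_def plus_fun_def by (simp add: scaleR_add_left sum.distrib)
next
  fix r :: real and b :: "nat \<Rightarrow> real"
  show "Amap n z (r *\<^sub>R b) = r *\<^sub>R Amap n z b"
    unfolding Amap_def by (simp add: scaleR_fun_def scaleR_sum_right)
qed

lemma Qb_eq:
  assumes n: "n \<ge> 1" and t: "t \<le> n"
    and Y: "\<forall>p\<in>{1..n}. Y p = (if b \<and> p = n then - Y' p else Y' p)"
  shows "(if b then pstarv n else psumv) Y t = psumv Y' t"
proof (cases b)
  case False
  then show ?thesis using Y t unfolding psumv_def by (auto intro!: sum.cong)
next
  case True
  show ?thesis
  proof (cases "t = n")
    case False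
    then have "psumv Y t = psumv Y' t" using Y t unfolding psumv_def by (auto intro!: sum.cong)
    then show ?thesis using True False unfolding pstarv_def by simp
  next
    case tn: True
    have "psumv Y (n - 1) = psumv Y' (n - 1)" unfolding psumv_def
    proof (rule sum.cong[OF refl])
      fix p assume p: "p \<in> {1..n-1}"
      then have "p \<in> {1..n}" "p \<noteq> n" using n by auto
      then show "Y p = Y' p" using Y by auto
    qed
    moreover have "Y n = - Y' n" using Y True n by auto
    moreover have "psumv Y' n = psumv Y' (n - 1) + Y' n"
    proof -
      obtain m where "n = Suc m" using n by (cases n) auto
      then show ?thesis unfolding psumv_def by simp
    qed
    ultimately show ?thesis using True tn unfolding pstarv_def by simp
  qed
qed

lemma modhelp: "i \<in> {1..n} \<Longrightarrow> (k * Suc n + i) mod Suc n = i"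
  by (metis atLeastAtMost_iff le_imp_less_Suc mod_less mod_mult_self3)

context flat
begin

definition key :: "nat \<Rightarrow> nat" where
  "key i = (if i \<in> N then rep i else Suc n) * Suc n + i"

definition rho :: "nat \<Rightarrow> nat" where
  "rho i = (if i \<in> {1..n} then rk key {1..n} i else i)"

definition piL :: "nat \<Rightarrow> nat" where "piL = inv rho"

definition U :: "nat \<Rightarrow> nat set" where "U r = {i\<in>N. rep i \<le> r}"

definition sgx :: "nat \<Rightarrow> real" where "sgx i = (if i \<in> N then sg i else 1)"

lemma N_n: "N \<subseteq> {1..n}" using NZ_sub[OF LRn] .

lemma key_inj: "inj_on key {1..n}"
proof (rule inj_onI)
  fix i j assume ij: "i \<in> {1..n}" "j \<in> {1..n}" "key i = key j"
  have "key i mod Suc n = i" unfolding key_def by (rule modhelp[OF ij(1)])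
  moreover have "key j mod Suc n = j" unfolding key_def by (rule modhelp[OF ij(2)])
  ultimately show "i = j" using ij(3) by metis
qed

lemma rho_img_down:
  assumes "D \<subseteq> {1..n}" "\<forall>u\<in>D. \<forall>j\<in>{1..n}. key j < key u \<longrightarrow> j \<in> D"
  shows "rho ` D = {1..card D}"
proof -
  have "\<And>i. i \<in> D \<Longrightarrow> rho i = rk key {1..n} i" using assms(1) unfolding rho_def by auto
  then have "rho ` D = rk key {1..n} ` D" by (rule image_cong[OF refl])
  also have "\<dots> = {1..card D}" using rk_down[OF _ key_inj assms] by simp
  finally show ?thesis .
qed

lemma rho_perm: "rho permutes {1..n}"
proof (rule bij_imp_permutes)
  have "rho ` {1..n} = {1..n}" using rho_img_down[of "{1..n}"] by simp
  moreover have "inj_on rho {1..n}"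
  proof -
    have "\<And>i. i \<in> {1..n} \<Longrightarrow> rho i = rk key {1..n} i" unfolding rho_def by simp
    then show ?thesis using rk_inj[OF _ key_inj] inj_on_cong by blast
  qed
  ultimately show "bij_betw rho {1..n} {1..n}" unfolding bij_betw_def by simp
  show "\<And>x. x \<notin> {1..n} \<Longrightarrow> rho x = x" unfolding rho_def by (rule if_not_P)
qed

lemma piL_perm: "piL permutes {1..n}"
  unfolding piL_def using permutes_inv[OF rho_perm] .

lemma piL_rho: "piL (rho i) = i"
  unfolding piL_def using permutes_inverses(2)[OF rho_perm] .

lemma rho_inj: "inj_on rho D" if "D \<subseteq> {1..n}"
  using permutes_inj_on[OF rho_perm] by (meson inj_on_subset subset_UNIV)

lemma psum_down:
  fixes z :: "nat \<Rightarrow> 'v::real_vector"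
  assumes "D \<subseteq> {1..n}" "\<forall>u\<in>D. \<forall>j\<in>{1..n}. key j < key u \<longrightarrow> j \<in> D"
  shows "psumv (\<lambda>p. sgx (piL p) *\<^sub>R z (piL p)) (card D) = (\<Sum>i\<in>D. sgx i *\<^sub>R z i)"
proof -
  have "psumv (\<lambda>p. sgx (piL p) *\<^sub>R z (piL p)) (card D) = (\<Sum>p\<in>rho ` D. sgx (piL p) *\<^sub>R z (piL p))"
    unfolding psumv_def rho_img_down[OF assms] ..
  also have "\<dots> = (\<Sum>i\<in>D. sgx i *\<^sub>R z i)"
    using rho_inj[OF assms(1)] by (simp add: sum.reindex piL_rho)
  finally show ?thesis .
qed

lemma U_sub: "U r \<subseteq> {1..n}" using N_n unfolding U_def by auto

lemma U_down: "\<forall>u\<in>U r. \<forall>j\<in>{1..n}. key j < key u \<longrightarrow> j \<in> U r"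
proof (intro ballI impI)
  fix u j assume u: "u \<in> U r" and j: "j \<in> {1..n}" and kj: "key j < key u"
  have uN: "u \<in> N" and ur: "rep u \<le> r" using u unfolding U_def by auto
  have un: "u \<le> n" using uN N_n by auto
  have repu: "rep u \<le> n" using repL_props(3)[OF uN] un by simp
  have ku: "key u = rep u * Suc n + u" using uN unfolding key_def by simp
  have jN: "j \<in> N"
  proof (rule ccontr)
    assume "j \<notin> N"
    then have "key j = Suc n * Suc n + j" unfolding key_def by simp
    moreover have "rep u * Suc n + u < Suc n * Suc n"
    proof -
      have "rep u * Suc n \<le> n * Suc n" using repu by (rule mult_le_mono1)
      then show ?thesis using un by simp
    qed
    ultimately show False using kj ku by simp
  qed
  have kj': "key j = rep j * Suc n + j" using jN unfolding key_def by simp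
  have "rep j \<le> rep u"
  proof (rule ccontr)
    assume "\<not> rep j \<le> rep u"
    then have "Suc (rep u) * Suc n \<le> rep j * Suc n" by (intro mult_le_mono1) simp
    then have "rep u * Suc n + Suc n \<le> rep j * Suc n" by simp
    then show False using kj ku kj' un by simp
  qed
  then show "j \<in> U r" using jN ur unfolding U_def by simp
qed

lemma Amap_vb:
  fixes z :: "nat \<Rightarrow> 'v::real_vector"
  shows "Amap n z (vb r) = (\<Sum>i\<in>{i\<in>N. rep i = r}. sg i *\<^sub>R z i)"
proof -
  have "Amap n z (vb r) = (\<Sum>i\<in>{1..n}. (if i \<in> {i\<in>N. rep i = r} then sg i *\<^sub>R z i else 0))"
    unfolding Amap_def vbL_def by (intro sum.cong) auto
  also have "\<dots> = (\<Sum>i\<in>{1..n} \<inter> {i\<in>N. rep i = r}. sg i *\<^sub>R z i)"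
    by (simp add: sum.inter_restrict)
  also have "{1..n} \<inter> {i\<in>N. rep i = r} = {i\<in>N. rep i = r}" using N_n by auto
  finally show ?thesis .
qed

lemma U_sum:
  fixes z :: "nat \<Rightarrow> 'v::real_vector"
  shows "(\<Sum>i\<in>U r. sgx i *\<^sub>R z i) = (\<Sum>r'\<in>{r'\<in>R. r' \<le> r}. Amap n z (vb r'))"
proof -
  have "(\<Sum>i\<in>U r. sgx i *\<^sub>R z i) = (\<Sum>r'\<in>{r'\<in>R. r' \<le> r}. \<Sum>i\<in>{i. i \<in> U r \<and> rep i = r'}. sgx i *\<^sub>R z i)"
    by (rule sum.group[symmetric]) (use finN finR in \<open>auto simp: U_def\<close>)
  also have "\<dots> = (\<Sum>r'\<in>{r'\<in>R. r' \<le> r}. Amap n z (vb r'))"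
  proof (rule sum.cong[OF refl])
    fix r' assume "r' \<in> {r'\<in>R. r' \<le> r}"
    then have "{i. i \<in> U r \<and> rep i = r'} = {i\<in>N. rep i = r'}" unfolding U_def by auto
    then show "(\<Sum>i\<in>{i. i \<in> U r \<and> rep i = r'}. sgx i *\<^sub>R z i) = Amap n z (vb r')"
      unfolding Amap_vb by (auto simp: sgx_def intro!: sum.cong)
  qed
  finally show ?thesis .
qed

lemma span_partial:
  fixes w :: "nat \<Rightarrow> 'v::real_vector"
  shows "span ((\<lambda>r. \<Sum>r'\<in>{r'\<in>R. r' \<le> r}. w r') ` R) = span (w ` R)"
proof -
  let ?P = "\<lambda>r. \<Sum>r'\<in>{r'\<in>R. r' \<le> r}. w r'"
  have A: "?P ` R \<subseteq> span (w ` R)"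
    by (intro image_subsetI span_sum span_base) auto
  have "\<forall>r. r \<in> R \<longrightarrow> w r \<in> span (?P ` R)"
  proof (intro allI)
    fix r show "r \<in> R \<longrightarrow> w r \<in> span (?P ` R)"
    proof (induction r rule: less_induct)
      case (less r)
      show ?case
      proof
        assume r: "r \<in> R"
        have eq: "{r'\<in>R. r' \<le> r} = insert r {r'\<in>R. r' < r}" using r by auto
        have "?P r = w r + (\<Sum>r'\<in>{r'\<in>R. r' < r}. w r')"
          unfolding eq by (subst sum.insert) (use finR in auto)
        then have "w r = ?P r - (\<Sum>r'\<in>{r'\<in>R. r' < r}. w r')" by simp
        moreover have "?P r \<in> span (?P ` R)" using r by (intro span_base) auto
        moreover have "(\<Sum>r'\<in>{r'\<in>R. r' < r}. w r') \<in> span (?P ` R)"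
          using less by (intro span_sum) auto
        ultimately show "w r \<in> span (?P ` R)" by (simp add: span_diff)
      qed
    qed
  qed
  then have B: "w ` R \<subseteq> span (?P ` R)" by auto
  show ?thesis using A B by (simp add: span_eq)
qed

lemma card_U_inj: "inj_on (\<lambda>r. card (U r)) R"
proof -
  have lt: "card (U r1) < card (U r2)" if "r1 \<in> R" "r2 \<in> R" "r1 < r2" for r1 r2
  proof -
    have r2: "r2 \<in> N" "rep r2 = r2" using that R_N R_rep by blast+
    have "r2 \<in> U r2" using r2 unfolding U_def by simp
    moreover have "r2 \<notin> U r1" using r2 that(3) unfolding U_def by simp
    moreover have "U r1 \<subseteq> U r2" using that unfolding U_def by auto
    ultimately have "U r1 \<subset> U r2" by blast
    moreover have "finite (U r2)" using finN unfolding U_def by auto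
    ultimately show ?thesis by (simp add: psubset_card_mono)
  qed
  show ?thesis
  proof (rule inj_onI)
    fix r1 r2 assume "r1 \<in> R" "r2 \<in> R" "card (U r1) = card (U r2)"
    then show "r1 = r2" using lt[of r1 r2] lt[of r2 r1] by (metis less_irrefl nat_neq_iff)
  qed
qed

lemma card_U_range: "r \<in> R \<Longrightarrow> card (U r) \<in> {1..n}"
proof -
  assume r: "r \<in> R"
  have rr: "r \<in> N" "rep r = r" using r R_N R_rep by blast+
  have "r \<in> U r" using rr unfolding U_def by simp
  moreover have "finite (U r)" using finN unfolding U_def by auto
  ultimately have "card (U r) \<ge> 1" by (metis One_nat_def Suc_leI card_gt_0_iff empty_iff)
  moreover have "card (U r) \<le> n" using U_sub card_mono[of "{1..n}" "U r"] by simp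
  ultimately show ?thesis by simp
qed

end


lemma prod_pm1: "finite S \<Longrightarrow> (\<forall>i\<in>S. f i \<in> {1,-1::real}) \<Longrightarrow> (\<Prod>i\<in>S. f i) \<in> {1,-1}"
  by (induction S rule: finite_induct) auto

context flat
begin

lemma sgx_pm: "sgx i \<in> {1,-1}"
  unfolding sgx_def using sgL_props(1) by auto

lemma flat_struct:
  fixes Dc :: bool
  assumes n1: "n \<ge> 1"
  obtains V T \<pi> \<epsilon> b where "finite V" "independent V" "span V = L" "card V = dim L"
    "card T = card V" "T \<subseteq> {1..n}" "\<pi> permutes {1..n}" "\<epsilon> \<in> {1..n} \<rightarrow> {-1,1}"
    "b \<Longrightarrow> Dc" "Dc \<Longrightarrow> (\<Prod>i\<in>{1..n}. \<epsilon> i) = 1"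
    "\<And>z::nat \<Rightarrow> 'v::real_vector. span (Amap n z ` V) =
        span ((\<lambda>t. (if b then pstarv n else psumv) (\<lambda>p. \<epsilon> p *\<^sub>R z (\<pi> p)) t) ` T)"
proof -
  define b where "b = (Dc \<and> (\<Prod>i\<in>{1..n}. sgx i) \<noteq> 1)"
  define fl where "fl = (\<lambda>p::nat. if b \<and> p = n then -1 else (1::real))"
  define \<epsilon> where "\<epsilon> = (\<lambda>p. fl p * sgx (piL p))"
  define V where "V = vb ` R"
  define T where "T = (\<lambda>r. card (U r)) ` R"
  have finV: "finite V" unfolding V_def using finR by simp
  have indV: "independent V" unfolding V_def using vb_indep by blast
  have spV: "span V = L" unfolding V_def using span_vb .
  have cV: "card V = dim L" unfolding V_def dim_L using vb_indep card_image by blast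
  have cT: "card T = card V" unfolding T_def V_def
    using card_image[OF card_U_inj] card_image vb_indep by metis
  have Tn: "T \<subseteq> {1..n}" unfolding T_def using card_U_range by blast
  have eps: "\<epsilon> \<in> {1..n} \<rightarrow> {-1,1}"
  proof
    fix p assume "p \<in> {1..n}"
    show "\<epsilon> p \<in> {-1,1}" unfolding \<epsilon>_def fl_def using sgx_pm[of "piL p"] by auto
  qed
  have prodeps: "(\<Prod>i\<in>{1..n}. \<epsilon> i) = 1" if Dc
  proof -
    have p1: "(\<Prod>i\<in>{1..n}. sgx (piL i)) = (\<Prod>i\<in>{1..n}. sgx i)"
      using prod.reindex_bij_betw[OF permutes_imp_bij[OF piL_perm], of sgx] by simp
    have pfl: "(\<Prod>i\<in>{1..n}. fl i) = (if b then -1 else 1)"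
    proof (cases b)
      case True
      have "(\<Prod>i\<in>{1..n}. fl i) = fl n * (\<Prod>i\<in>{1..n} - {n}. fl i)"
        using n1 by (subst prod.remove[of _ n]) auto
      also have "(\<Prod>i\<in>{1..n} - {n}. fl i) = 1" unfolding fl_def by (intro prod.neutral) auto
      finally show ?thesis using True unfolding fl_def by simp
    next
      case False then show ?thesis unfolding fl_def by simp
    qed
    have pm: "(\<Prod>i\<in>{1..n}. sgx i) \<in> {1,-1}" using prod_pm1[of "{1..n}" sgx] sgx_pm by simp
    have "(\<Prod>i\<in>{1..n}. \<epsilon> i) = (\<Prod>i\<in>{1..n}. fl i) * (\<Prod>i\<in>{1..n}. sgx i)"
      unfolding \<epsilon>_def prod.distrib p1 ..
    then show ?thesis using pfl pm that unfolding b_def by auto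
  qed
  have spaneq: "span (Amap n z ` V) =
        span ((\<lambda>t. (if b then pstarv n else psumv) (\<lambda>p. \<epsilon> p *\<^sub>R z (piL p)) t) ` T)"
    for z :: "nat \<Rightarrow> 'v::real_vector"
  proof -
    let ?Y = "\<lambda>p. \<epsilon> p *\<^sub>R z (piL p)"
    let ?Y' = "\<lambda>p. sgx (piL p) *\<^sub>R z (piL p)"
    have Y: "\<forall>p\<in>{1..n}. ?Y p = (if b \<and> p = n then - ?Y' p else ?Y' p)"
      unfolding \<epsilon>_def fl_def by auto
    have H: "(if b then pstarv n else psumv) ?Y (card (U r)) = (\<Sum>r'\<in>{r'\<in>R. r' \<le> r}. Amap n z (vb r'))"
      if r: "r \<in> R" for r
    proof -
      have "(if b then pstarv n else psumv) ?Y (card (U r)) = psumv ?Y' (card (U r))"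
        using Qb_eq[OF n1 _ Y] card_U_range[OF r] by simp
      also have "\<dots> = (\<Sum>i\<in>U r. sgx i *\<^sub>R z i)" using psum_down[OF U_sub U_down] .
      also have "\<dots> = (\<Sum>r'\<in>{r'\<in>R. r' \<le> r}. Amap n z (vb r'))" using U_sum .
      finally show ?thesis .
    qed
    have "(\<lambda>t. (if b then pstarv n else psumv) ?Y t) ` T
        = (\<lambda>r. \<Sum>r'\<in>{r'\<in>R. r' \<le> r}. Amap n z (vb r')) ` R"
      unfolding T_def image_image using H by (intro image_cong) auto
    then have "span ((\<lambda>t. (if b then pstarv n else psumv) ?Y t) ` T) = span ((\<lambda>r. Amap n z (vb r)) ` R)"
      using span_partial[of "\<lambda>r. Amap n z (vb r)"] by simp
    then show ?thesis unfolding V_def image_image by simp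
  qed
  show ?thesis
    using that[OF finV indV spV cV cT Tn piL_perm eps _ prodeps spaneq] unfolding b_def by blast
qed

end


lemma det_iff_indep:
  fixes u :: "'d::finite \<Rightarrow> real^'d"
  shows "det (\<chi> r. u r) \<noteq> 0 \<longleftrightarrow> (\<forall>c. (\<Sum>r\<in>UNIV. c r *\<^sub>R u r) = 0 \<longrightarrow> (\<forall>r. c r = 0))"
proof -
  have rw: "row i (\<chi> r. u r) = u i" for i by (simp add: row_def vec_eq_iff)
  have "det (\<chi> r. u r) \<noteq> 0 \<longleftrightarrow> invertible (\<chi> r. u r)" by (simp add: invertible_det_nz)
  also have "\<dots> \<longleftrightarrow> (\<exists>B::real^'d^'d. (\<chi> r. u r) ** B = mat 1)" by (rule invertible_right_inverse)
  also have "\<dots> \<longleftrightarrow> (\<forall>c. sum (\<lambda>i. c i *s row i (\<chi> r. u r)) UNIV = 0 \<longrightarrow> (\<forall>i. c i = 0))"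
    by (rule matrix_right_invertible_independent_rows)
  also have "\<dots> \<longleftrightarrow> (\<forall>c. (\<Sum>r\<in>UNIV. c r *\<^sub>R u r) = 0 \<longrightarrow> (\<forall>r. c r = 0))"
    by (simp add: rw scalar_mult_eq_scaleR)
  finally show ?thesis .
qed

lemma good_iff_det:
  fixes u :: "nat \<Rightarrow> real^'d"
  assumes fin: "finite I" and b: "bij_betw b (UNIV::'d set) I"
  shows "(inj_on u I \<and> independent (u ` I)) \<longleftrightarrow> det (\<chi> r. u (b r)) \<noteq> 0"
proof -
  have "(inj_on u I \<and> independent (u ` I)) \<longleftrightarrow> (\<forall>c. (\<Sum>i\<in>I. c i *\<^sub>R u i) = 0 \<longrightarrow> (\<forall>i\<in>I. c i = 0))"
    using indep_family_set[OF fin] by blast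
  also have "\<dots> \<longleftrightarrow> (\<forall>c. (\<Sum>r\<in>UNIV. c r *\<^sub>R u (b r)) = 0 \<longrightarrow> (\<forall>r. c r = 0))"
  proof
    assume H: "\<forall>c. (\<Sum>i\<in>I. c i *\<^sub>R u i) = 0 \<longrightarrow> (\<forall>i\<in>I. c i = 0)"
    show "\<forall>c. (\<Sum>r\<in>UNIV. c r *\<^sub>R u (b r)) = 0 \<longrightarrow> (\<forall>r. c r = 0)"
    proof (intro allI impI)
      fix c r assume s: "(\<Sum>r\<in>UNIV. c r *\<^sub>R u (b r)) = 0"
      let ?c = "\<lambda>i. c (the_inv_into UNIV b i)"
      have "(\<Sum>i\<in>I. ?c i *\<^sub>R u i) = (\<Sum>r\<in>UNIV. ?c (b r) *\<^sub>R u (b r))"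
        using sum.reindex_bij_betw[OF b, of "\<lambda>i. ?c i *\<^sub>R u i"] by simp
      also have "\<dots> = (\<Sum>r\<in>UNIV. c r *\<^sub>R u (b r))"
        using b by (simp add: bij_betw_def the_inv_into_f_f)
      finally have "(\<Sum>i\<in>I. ?c i *\<^sub>R u i) = 0" using s by simp
      then have "\<forall>i\<in>I. ?c i = 0" using H[rule_format, of ?c] by blast
      then have "?c (b r) = 0" using b by (auto simp: bij_betw_def)
      then show "c r = 0" using b by (simp add: bij_betw_def the_inv_into_f_f)
    qed
  next
    assume H: "\<forall>c. (\<Sum>r\<in>UNIV. c r *\<^sub>R u (b r)) = 0 \<longrightarrow> (\<forall>r. c r = 0)"
    show "\<forall>c. (\<Sum>i\<in>I. c i *\<^sub>R u i) = 0 \<longrightarrow> (\<forall>i\<in>I. c i = 0)"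
    proof (intro allI impI ballI)
      fix c i assume s: "(\<Sum>i\<in>I. c i *\<^sub>R u i) = 0" and i: "i \<in> I"
      have "(\<Sum>r\<in>UNIV. c (b r) *\<^sub>R u (b r)) = 0"
        using sum.reindex_bij_betw[OF b, of "\<lambda>i. c i *\<^sub>R u i"] s by simp
      then have "\<forall>r. c (b r) = 0" using H[rule_format, of "\<lambda>r. c (b r)"] by blast
      moreover obtain r where "b r = i" using b i by (auto simp: bij_betw_def)
      ultimately show "c i = 0" by blast
    qed
  qed
  also have "\<dots> \<longleftrightarrow> det (\<chi> r. u (b r)) \<noteq> 0" using det_iff_indep[of "\<lambda>r. u (b r)"] by simp
  finally show ?thesis .
qed

lemma good_meas:
  fixes Q :: "'x \<Rightarrow> nat \<Rightarrow> real^'d"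
  assumes fin: "finite I" and cI: "card I = CARD('d)"
    and Qm: "\<And>t. t \<in> I \<Longrightarrow> (\<lambda>x. Q x t) \<in> borel_measurable N"
  shows "{x \<in> space N. inj_on (Q x) I \<and> independent (Q x ` I)} \<in> sets N"
proof -
  obtain b where b: "bij_betw b (UNIV::'d set) I"
    using finite_same_card_bij[of "UNIV::'d set" I] fin cI by auto
  have bI: "b r \<in> I" for r using b by (auto simp: bij_betw_def)
  have eq: "{x \<in> space N. inj_on (Q x) I \<and> independent (Q x ` I)} =
            {x \<in> space N. det (\<chi> r. Q x (b r)) \<noteq> 0}"
    using good_iff_det[OF fin b] by blast
  have comp: "(\<lambda>x. Q x (b i) $ j) \<in> borel_measurable N" for i j
  proof -
    have "(\<lambda>v::real^'d. v $ j) \<in> borel_measurable borel"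
      by (intro borel_measurable_continuous_onI continuous_on_component continuous_on_id)
    then show ?thesis using measurable_compose[OF Qm[OF bI[of i]]] by blast
  qed
  have "(\<lambda>x. det (\<chi> r. Q x (b r))) \<in> borel_measurable N"
    unfolding det_def using comp by simp
  then have "{x \<in> space N. det (\<chi> r. Q x (b r)) \<noteq> 0} \<in> sets N" by measurable
  then show ?thesis using eq by simp
qed


lemma det_rank:
  fixes u :: "nat \<Rightarrow> real^'d"
  assumes finT: "finite T" and cI: "card I0 = CARD('d)" and finI: "finite I0"
    and c1: "CARD('d) \<le> card T \<Longrightarrow> I0 \<subseteq> T" and c2: "card T < CARD('d) \<Longrightarrow> T \<subseteq> I0"
    and inj: "inj_on u I0" and ind: "independent (u ` I0)"
  shows "dim (u ` T) = min (card T) CARD('d)"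
proof (cases "CARD('d) \<le> card T")
  case True
  have "card (u ` I0) = CARD('d)" using inj cI by (simp add: card_image)
  moreover have "card (u ` I0) \<le> dim (u ` T)"
    using independent_card_le_dim[of "u ` I0" "u ` T"] c1[OF True] ind by blast
  moreover have "dim (u ` T) \<le> CARD('d)" by (rule dim_subset_UNIV_cart)
  ultimately show ?thesis using True by simp
next
  case False
  then have TI: "T \<subseteq> I0" using c2 by simp
  have "independent (u ` T)" using ind TI by (meson image_mono independent_mono)
  then have "dim (u ` T) = card (u ` T)" by (rule dim_eq_card_independent)
  also have "\<dots> = card T" using inj TI by (meson card_image inj_on_subset)
  finally show ?thesis using False by simp
qed

lemma prob_rank:
  fixes M :: "'a measure" and \<xi> :: "nat \<Rightarrow> 'a \<Rightarrow> real^'d"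
    and Q :: "(nat \<Rightarrow> real^'d) \<Rightarrow> nat \<Rightarrow> real^'d"
  assumes M: "prob_space M" and meas: "\<forall>i\<in>{1..n}. \<xi> i \<in> borel_measurable M"
    and LI: "law_invariant M n \<xi> E" and pi: "\<pi> permutes {1..n}" and eps: "\<epsilon> \<in> {1..n} \<rightarrow> {-1,1}"
    and E: "E \<epsilon>" and dn: "CARD('d) \<le> n" and Tn: "T \<subseteq> {1..n}"
    and Qm: "\<And>t. t \<in> {1..n} \<Longrightarrow> (\<lambda>x. Q x t) \<in> borel_measurable (PiM {1..n} (\<lambda>_. borel))"
    and Qloc: "\<And>x x' t. t \<in> {1..n} \<Longrightarrow> (\<forall>i\<in>{1..n}. x i = x' i) \<Longrightarrow> Q x t = Q x' t"
    and ind: "\<forall>I. I \<subseteq> {1..n} \<and> card I = CARD('d) \<longrightarrow>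
       (AE \<omega> in M. inj_on (\<lambda>t. Q (\<lambda>i. \<xi> i \<omega>) t) I \<and> independent ((\<lambda>t. Q (\<lambda>i. \<xi> i \<omega>) t) ` I))"
  shows "AE \<omega> in M. dim ((\<lambda>t. Q (\<lambda>p. \<epsilon> p *\<^sub>R \<xi> (\<pi> p) \<omega>) t) ` T) = min (card T) CARD('d)"
proof -
  have finT: "finite T" using Tn finite_subset by blast
  obtain I0 where I0: "I0 \<subseteq> {1..n}" "card I0 = CARD('d)"
    "CARD('d) \<le> card T \<Longrightarrow> I0 \<subseteq> T" "card T < CARD('d) \<Longrightarrow> T \<subseteq> I0"
  proof (cases "CARD('d) \<le> card T")
    case True
    then obtain J where "J \<subseteq> T" "card J = CARD('d)" by (meson obtain_subset_with_card_n)
    then show ?thesis using that Tn True by auto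
  next
    case False
    have "card ({1..n} - T) = n - card T" using Tn finT by (simp add: card_Diff_subset)
    then have "CARD('d) - card T \<le> card ({1..n} - T)" using dn by simp
    then obtain J where J: "J \<subseteq> {1..n} - T" "card J = CARD('d) - card T" "finite J"
      by (meson obtain_subset_with_card_n)
    have "card (T \<union> J) = card T + card J" using J finT by (intro card_Un_disjoint) auto
    then have "card (T \<union> J) = CARD('d)" using J False by simp
    then show ?thesis using that[of "T \<union> J"] J Tn False by auto
  qed
  have finI0: "finite I0" using I0(1) finite_subset by blast
  let ?good = "\<lambda>x. inj_on (Q x) I0 \<and> independent (Q x ` I0)"
  have loc: "?good x = ?good x'" if "\<forall>i\<in>{1..n}. x i = x' i" for x x'
  proof -
    have h: "\<And>t. t \<in> I0 \<Longrightarrow> Q x t = Q x' t" using Qloc that I0(1) by blast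
    have "inj_on (Q x) I0 = inj_on (Q x') I0" by (rule inj_on_cong) (rule h)
    moreover have "Q x ` I0 = Q x' ` I0" by (rule image_cong[OF refl]) (rule h)
    ultimately show ?thesis by simp
  qed
  let ?N = "PiM {1..n} (\<lambda>_. borel :: (real^'d) measure)"
  define X where "X = (\<lambda>\<omega>. \<lambda>i\<in>{1..n}. \<xi> i \<omega>)"
  define Y where "Y = (\<lambda>\<omega>. \<lambda>i\<in>{1..n}. \<epsilon> i *\<^sub>R \<xi> (\<pi> i) \<omega>)"
  have Xm: "X \<in> measurable M ?N" unfolding X_def
    by (rule measurable_restrict) (use meas in auto)
  have Ym: "Y \<in> measurable M ?N" unfolding Y_def
  proof (rule measurable_restrict)
    fix i assume "i \<in> {1..n}"
    then have "\<pi> i \<in> {1..n}" using permutes_in_image[OF pi] by blast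
    then have "\<xi> (\<pi> i) \<in> borel_measurable M" using meas by blast
    then show "(\<lambda>\<omega>. \<epsilon> i *\<^sub>R \<xi> (\<pi> i) \<omega>) \<in> measurable M borel" by measurable
  qed
  have G: "{x \<in> space ?N. ?good x} \<in> sets ?N"
    using good_meas[OF finI0 I0(2), of Q ?N] Qm I0(1) by blast
  have deq: "distr M ?N X = distr M ?N Y"
    using LI pi eps E unfolding law_invariant_def X_def Y_def by blast
  have "AE \<omega> in M. ?good (\<lambda>i. \<xi> i \<omega>)" using ind I0 by blast
  moreover have eqX: "?good (X \<omega>) = ?good (\<lambda>i. \<xi> i \<omega>)" for \<omega>
    by (rule loc) (simp add: X_def)
  ultimately have "AE \<omega> in M. ?good (X \<omega>)" by (metis (no_types, lifting) eventually_mono)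
  then have "AE x in distr M ?N X. ?good x" by (rule AE_distr_iff[OF Xm G, THEN iffD2])
  then have "AE x in distr M ?N Y. ?good x" unfolding deq .
  then have "AE \<omega> in M. ?good (Y \<omega>)" by (rule AE_distr_iff[OF Ym G, THEN iffD1])
  moreover have eqY: "?good (Y \<omega>) = ?good (\<lambda>p. \<epsilon> p *\<^sub>R \<xi> (\<pi> p) \<omega>)" for \<omega>
    by (rule loc) (simp add: Y_def)
  ultimately have "AE \<omega> in M. ?good (\<lambda>p. \<epsilon> p *\<^sub>R \<xi> (\<pi> p) \<omega>)"
    by (auto elim!: eventually_mono)
  then show ?thesis
  proof (rule eventually_mono)
    fix \<omega> assume "?good (\<lambda>p. \<epsilon> p *\<^sub>R \<xi> (\<pi> p) \<omega>)"
    then show "dim ((\<lambda>t. Q (\<lambda>p. \<epsilon> p *\<^sub>R \<xi> (\<pi> p) \<omega>) t) ` T) = min (card T) CARD('d)"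
      using det_rank[OF finT I0(2) finI0 I0(3) I0(4)] by blast
  qed
qed


definition hypf :: "nat \<Rightarrow> (nat \<Rightarrow> real) set \<Rightarrow> bool" where
  "hypf n H \<longleftrightarrow> (\<exists>i j. H = Rn n \<inter> {x. x i = x j}) \<or> (\<exists>i j. H = Rn n \<inter> {x. x i = - x j})
     \<or> (\<exists>k. H = Rn n \<inter> {x. x k = 0})"

lemma arrD_sub: "arr_D n \<subseteq> arr_B n" unfolding arr_B_def by blast

lemma arrB_hyp: "H \<in> arr_B n \<Longrightarrow> hypf n H"
  unfolding arr_B_def arr_D_def hypf_def by blast

lemma arrB_fin: "finite (arr_B n)"
proof -
  have "arr_B n \<subseteq> (\<lambda>(i,j). Rn n \<inter> {x. x i = x j}) ` ({1..n} \<times> {1..n})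
      \<union> (\<lambda>(i,j). Rn n \<inter> {x. x i = - x j}) ` ({1..n} \<times> {1..n})
      \<union> (\<lambda>k. Rn n \<inter> {x. x k = 0}) ` {1..n}"
    unfolding arr_B_def arr_D_def by force
  then show ?thesis by (rule finite_subset) auto
qed

lemma Rn_subspace: "subspace (Rn n)"
  by (rule subspaceI) (auto simp: Rn_def scaleR_fun_def plus_fun_def zero_fun_def)

lemma hyp_subspace: assumes "hypf n H" shows "subspace H"
  using assms unfolding hypf_def
proof (elim disjE exE)
  fix i j assume H: "H = Rn n \<inter> {x. x i = x j}"
  show "subspace H" unfolding H
    by (rule subspaceI) (auto simp: Rn_def scaleR_fun_def plus_fun_def zero_fun_def)
next
  fix i j assume H: "H = Rn n \<inter> {x. x i = - x j}"
  show "subspace H" unfolding H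
    by (rule subspaceI) (auto simp: Rn_def scaleR_fun_def plus_fun_def zero_fun_def)
next
  fix k assume H: "H = Rn n \<inter> {x. x k = 0}"
  show "subspace H" unfolding H
    by (rule subspaceI) (auto simp: Rn_def scaleR_fun_def plus_fun_def zero_fun_def)
qed

lemma flat_Inter:
  assumes ne: "B \<noteq> {}" and hyp: "\<forall>H\<in>B. hypf n H"
  shows "flat n (\<Inter>B)"
proof
  obtain H0 where H0: "H0 \<in> B" using ne by blast
  have "H0 \<subseteq> Rn n" using hyp H0 unfolding hypf_def by blast
  then show "\<Inter>B \<subseteq> Rn n" using H0 by blast
  show "subspace (\<Inter>B)"
    using hyp_subspace hyp by (intro subspace_Inter) blast
  show "closedL n (\<Inter>B)"
    unfolding closedL_def
  proof (intro ballI impI)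
    fix x assume x: "x \<in> Rn n" and C: "(\<forall>i. (\<forall>y\<in>\<Inter>B. y i = 0) \<longrightarrow> x i = 0) \<and>
      (\<forall>i j. \<forall>s\<in>{1,-1::real}. (\<forall>y\<in>\<Inter>B. y i = s * y j) \<longrightarrow> x i = s * x j)"
    show "x \<in> \<Inter>B"
    proof
      fix H assume H: "H \<in> B"
      have sub: "\<Inter>B \<subseteq> H" using H by blast
      have "hypf n H" using hyp H by blast
      then show "x \<in> H" unfolding hypf_def
      proof (elim disjE exE)
        fix i j assume HH: "H = Rn n \<inter> {x. x i = x j}"
        have "\<forall>y\<in>\<Inter>B. y i = 1 * y j" using sub HH by auto
        then have "x i = 1 * x j" using C by blast
        then show "x \<in> H" using HH x by simp
      next
        fix i j assume HH: "H = Rn n \<inter> {x. x i = - x j}"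
        have "\<forall>y\<in>\<Inter>B. y i = -1 * y j" using sub HH by auto
        then have "x i = -1 * x j" using C by blast
        then show "x \<in> H" using HH x by simp
      next
        fix k assume HH: "H = Rn n \<inter> {x. x k = 0}"
        have "\<forall>y\<in>\<Inter>B. y k = 0" using sub HH by auto
        then have "x k = 0" using C by blast
        then show "x \<in> H" using HH x by simp
      qed
    qed
  qed
qed

lemma flat_Rn: "flat n (Rn n)"
  by standard (auto simp: Rn_subspace closedL_def)

lemma dim_Rn: "dim (Rn n) = n"
proof -
  define e where "e = (\<lambda>i::nat. \<lambda>j::nat. if j = i then (1::real) else 0)"
  have ev: "(\<Sum>i\<in>{1..n}. c i *\<^sub>R e i) j = (if j \<in> {1..n} then c j else 0)" for c j
  proof -
    have "(\<Sum>i\<in>{1..n}. c i *\<^sub>R e i) j = (\<Sum>i\<in>{1..n}. c i * e i j)"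
      by (simp add: fun_sum_apply fun_scaleR_apply)
    also have "\<dots> = (\<Sum>i\<in>{1..n}. if i = j then c i else 0)"
      by (rule sum.cong) (auto simp: e_def)
    also have "\<dots> = (if j \<in> {1..n} then c j else 0)" by (simp add: sum.delta')
    finally show ?thesis .
  qed
  have "\<forall>c. (\<Sum>i\<in>{1..n}. c i *\<^sub>R e i) = 0 \<longrightarrow> (\<forall>i\<in>{1..n}. c i = 0)"
  proof (intro allI impI ballI)
    fix c i assume "(\<Sum>i\<in>{1..n}. c i *\<^sub>R e i) = 0" "i \<in> {1..n}"
    then show "c i = 0" using ev[of c i] by simp
  qed
  then have ind: "inj_on e {1..n}" "independent (e ` {1..n})"
    using indep_family_set[of "{1..n}" e] by auto
  have sp: "span (e ` {1..n}) = Rn n"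
  proof (rule span_subspace)
    show "e ` {1..n} \<subseteq> Rn n" unfolding e_def Rn_def by auto
    show "Rn n \<subseteq> span (e ` {1..n})"
    proof
      fix x assume x: "x \<in> Rn n"
      have "x = (\<Sum>i\<in>{1..n}. x i *\<^sub>R e i)"
      proof
        fix j show "x j = (\<Sum>i\<in>{1..n}. x i *\<^sub>R e i) j" using x unfolding ev Rn_def by auto
      qed
      moreover have "(\<Sum>i\<in>{1..n}. x i *\<^sub>R e i) \<in> span (e ` {1..n})"
        by (intro span_sum span_scale span_base) auto
      ultimately show "x \<in> span (e ` {1..n})" by simp
    qed
    show "subspace (Rn n)" by (rule Rn_subspace)
  qed
  have "dim (Rn n) = card (e ` {1..n})"
    using dim_eq_card[of "e ` {1..n}" "Rn n"] sp ind(2) by (metis Rn_subspace span_eq_iff)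
  also have "\<dots> = n" using ind(1) by (simp add: card_image)
  finally show ?thesis .
qed

lemma psumv_meas: "t \<le> n \<Longrightarrow> (\<lambda>x. psumv x t) \<in> borel_measurable (PiM {1..n} (\<lambda>_. borel :: (real^'d) measure))"
  unfolding psumv_def by (intro borel_measurable_sum measurable_component_singleton) auto

lemma pstarv_meas: "t \<in> {1..n} \<Longrightarrow> (\<lambda>x. pstarv n x t) \<in> borel_measurable (PiM {1..n} (\<lambda>_. borel :: (real^'d) measure))"
proof -
  assume t: "t \<in> {1..n}"
  have a: "(\<lambda>x. psumv x (n - 1)) \<in> borel_measurable (PiM {1..n} (\<lambda>_. borel :: (real^'d) measure))"
    by (rule psumv_meas) simp
  have b: "(\<lambda>x. psumv x t) \<in> borel_measurable (PiM {1..n} (\<lambda>_. borel :: (real^'d) measure))"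
    by (rule psumv_meas) (use t in simp)
  have c: "(\<lambda>x. x n) \<in> borel_measurable (PiM {1..n} (\<lambda>_. borel :: (real^'d) measure))"
    by (rule measurable_component_singleton) (use t in simp)
  show ?thesis
  proof (cases "t = n")
    case True
    then have eq: "(\<lambda>x. pstarv n x t) = (\<lambda>x. psumv x (n - 1) - x n)" unfolding pstarv_def by simp
    show ?thesis unfolding eq by (rule borel_measurable_diff[OF a c])
  next
    case False
    then have eq: "(\<lambda>x. pstarv n x t) = (\<lambda>x. psumv x t)" unfolding pstarv_def by simp
    show ?thesis unfolding eq by (rule b)
  qed
qed

lemma psumv_loc: "t \<le> n \<Longrightarrow> (\<forall>i\<in>{1..n}. x i = x' i) \<Longrightarrow> psumv x t = psumv x' t"
  unfolding psumv_def by (intro sum.cong) auto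

lemma pstarv_loc: "t \<in> {1..n} \<Longrightarrow> (\<forall>i\<in>{1..n}. x i = x' i) \<Longrightarrow> pstarv n x t = pstarv n x' t"
  unfolding pstarv_def using psumv_loc[of t n x x'] psumv_loc[of "n-1" n x x'] by auto


lemma flat_ae:
  fixes M :: "'a measure" and \<xi> :: "nat \<Rightarrow> 'a \<Rightarrow> real^'d" and Dc :: bool
  assumes fl: "flat n L" and n1: "n \<ge> 1" and M: "prob_space M"
    and meas: "\<forall>i\<in>{1..n}. \<xi> i \<in> borel_measurable M" and dn: "CARD('d) \<le> n"
    and LI: "law_invariant M n \<xi> E"
    and E1: "\<And>\<epsilon>. Dc \<Longrightarrow> (\<Prod>i\<in>{1..n}. \<epsilon> i) = 1 \<Longrightarrow> E \<epsilon>"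
    and E2: "\<And>\<epsilon>. \<not> Dc \<Longrightarrow> E \<epsilon>"
    and I1: "any_d_indep M n (psum \<xi>)"
    and I2: "Dc \<Longrightarrow> any_d_indep M n (psum_star n \<xi>)"
  shows "AE \<omega> in M. dim (L \<inter> ker_A n \<xi> \<omega>) = dim L - CARD('d)"
proof -
  interpret flat n L by (rule fl)
  show ?thesis
  proof (rule flat_struct[OF n1, of Dc, where 'v="real^'d"])
  fix V T \<pi> \<epsilon> b
  assume V: "finite V" "independent V" "span V = L" "card V = dim L"
    and T: "card T = card V" "T \<subseteq> {1..n}" and pi: "\<pi> permutes {1..n}"
    and eps: "\<epsilon> \<in> {1..n} \<rightarrow> {-1,1}" and bD: "b \<Longrightarrow> Dc" and pe: "Dc \<Longrightarrow> (\<Prod>i\<in>{1..n}. \<epsilon> i) = 1"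
    and sp: "\<And>z::nat \<Rightarrow> real^'d. span (Amap n z ` V) =
        span ((\<lambda>t. (if b then pstarv n else psumv) (\<lambda>p. \<epsilon> p *\<^sub>R z (\<pi> p)) t) ` T)"
  define Q :: "(nat \<Rightarrow> real^'d) \<Rightarrow> nat \<Rightarrow> real^'d" where "Q = (if b then pstarv n else psumv)"
  have E: "E \<epsilon>" using E1 E2 pe by blast
  have Qm: "\<And>t. t \<in> {1..n} \<Longrightarrow> (\<lambda>x. Q x t) \<in> borel_measurable (PiM {1..n} (\<lambda>_. borel))"
    unfolding Q_def using psumv_meas pstarv_meas by auto
  have Qloc: "\<And>x x' t. t \<in> {1..n} \<Longrightarrow> (\<forall>i\<in>{1..n}. x i = x' i) \<Longrightarrow> Q x t = Q x' t"
  proof -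
    fix x x' :: "nat \<Rightarrow> real^'d" and t assume t: "t \<in> {1..n}" and h: "\<forall>i\<in>{1..n}. x i = x' i"
    have "t \<le> n" using t by simp
    then show "Q x t = Q x' t" unfolding Q_def using psumv_loc[OF _ h] pstarv_loc[OF t h] by simp
  qed
  have ind: "\<forall>I. I \<subseteq> {1..n} \<and> card I = CARD('d) \<longrightarrow>
       (AE \<omega> in M. inj_on (\<lambda>t. Q (\<lambda>i. \<xi> i \<omega>) t) I \<and> independent ((\<lambda>t. Q (\<lambda>i. \<xi> i \<omega>) t) ` I))"
  proof (cases b)
    case True
    have "(\<lambda>t. Q (\<lambda>i. \<xi> i \<omega>) t) = (\<lambda>k. psum_star n \<xi> k \<omega>)" for \<omega>
      using True unfolding Q_def by (simp add: fun_eq_iff psum_star_def pstarv_def psum_def psumv_def)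
    then show ?thesis using I2[OF bD[OF True]] unfolding any_d_indep_def by simp
  next
    case False
    have "(\<lambda>t. Q (\<lambda>i. \<xi> i \<omega>) t) = (\<lambda>k. psum \<xi> k \<omega>)" for \<omega>
      using False unfolding Q_def by (simp add: fun_eq_iff psum_def psumv_def)
    then show ?thesis using I1 unfolding any_d_indep_def by simp
  qed
  have ae: "AE \<omega> in M. dim ((\<lambda>t. Q (\<lambda>p. \<epsilon> p *\<^sub>R \<xi> (\<pi> p) \<omega>) t) ` T) = min (card T) CARD('d)"
    by (rule prob_rank[OF M meas LI pi eps E dn T(2) Qm Qloc ind])
  then show ?thesis
  proof (rule eventually_mono)
    fix \<omega> assume H: "dim ((\<lambda>t. Q (\<lambda>p. \<epsilon> p *\<^sub>R \<xi> (\<pi> p) \<omega>) t) ` T) = min (card T) CARD('d)"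
    define z where "z = (\<lambda>i. \<xi> i \<omega>)"
    have lin: "linear (Amap n z)" by (rule Amap_linear)
    have "Amap n z ` L = span (Amap n z ` V)"
      using V(3) lin by (metis span_linear_image)
    then have "dim (Amap n z ` L) = dim (span ((\<lambda>t. Q (\<lambda>p. \<epsilon> p *\<^sub>R z (\<pi> p)) t) ` T))"
      using sp[of z] unfolding Q_def by simp
    also have "\<dots> = min (dim L) CARD('d)" using H T V(4) unfolding z_def by simp
    finally have dA: "dim (Amap n z ` L) = min (dim L) CARD('d)" .
    have "dim L = dim {x\<in>L. Amap n z x = 0} + dim (Amap n z ` L)"
      by (rule rank_nullity_gen[OF lin Lsub V(1)]) (use V(3) in \<open>simp add: span_superset\<close>)
    moreover have "{x\<in>L. Amap n z x = 0} = L \<inter> ker_A n \<xi> \<omega>"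
      using LRn unfolding ker_A_def Amap_def z_def by auto
    ultimately show "dim (L \<inter> ker_A n \<xi> \<omega>) = dim L - CARD('d)" using dA by simp
  qed
  qed
qed


lemma ker_sub: "ker_A n \<xi> \<omega> \<subseteq> Rn n" unfolding ker_A_def by auto

lemma ker_is_subspace: "is_subspace (ker_A n \<xi> \<omega>)"
  unfolding is_subspace_def
proof (intro conjI ballI allI)
  show "0 \<in> ker_A n \<xi> \<omega>" unfolding ker_A_def Rn_def by simp
next
  fix x y assume "x \<in> ker_A n \<xi> \<omega>" "y \<in> ker_A n \<xi> \<omega>"
  then show "x + y \<in> ker_A n \<xi> \<omega>"
    unfolding ker_A_def Rn_def by (simp add: scaleR_add_left sum.distrib)
next
  fix c :: real and x assume "x \<in> ker_A n \<xi> \<omega>"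
  moreover have "(\<Sum>i\<in>{1..n}. (c * x i) *\<^sub>R \<xi> i \<omega>) = c *\<^sub>R (\<Sum>i\<in>{1..n}. x i *\<^sub>R \<xi> i \<omega>)"
    by (simp add: scaleR_sum_right)
  ultimately show "(\<lambda>i. c * x i) \<in> ker_A n \<xi> \<omega>"
    unfolding ker_A_def Rn_def by simp
qed

lemma main_case:
  fixes M :: "'a measure" and \<xi> :: "nat \<Rightarrow> 'a \<Rightarrow> real^'d" and Dc :: bool
  assumes M: "prob_space M"
    and meas: "\<forall>i\<in>{1..n}. \<xi> i \<in> borel_measurable M" and dn: "CARD('d) \<le> n"
    and LI: "law_invariant M n \<xi> E"
    and E1: "\<And>\<epsilon>. Dc \<Longrightarrow> (\<Prod>i\<in>{1..n}. \<epsilon> i) = 1 \<Longrightarrow> E \<epsilon>"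
    and E2: "\<And>\<epsilon>. \<not> Dc \<Longrightarrow> E \<epsilon>"
    and I1: "any_d_indep M n (psum \<xi>)"
    and I2: "Dc \<Longrightarrow> any_d_indep M n (psum_star n \<xi>)"
    and ArrH: "\<forall>H\<in>Arr. hypf n H" and finA: "finite Arr"
  shows "AE \<omega> in M. n - vdim (ker_A n \<xi> \<omega>) = CARD('d) \<and> general_position n Arr (ker_A n \<xi> \<omega>)"
proof -
  have c0: "0 < CARD('d)" by simp
  have n1: "n \<ge> 1" using dn c0 by linarith
  let ?FL = "{B. B \<subseteq> Arr \<and> B \<noteq> {}}"
  have finFL: "finite ?FL" using finA by simp
  have ae0: "AE \<omega> in M. dim (Rn n \<inter> ker_A n \<xi> \<omega>) = dim (Rn n) - CARD('d)"
    by (rule flat_ae[OF flat_Rn n1 M meas dn LI E1 E2 I1 I2])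
  have ae1: "AE \<omega> in M. \<forall>B\<in>?FL. dim (\<Inter>B \<inter> ker_A n \<xi> \<omega>) = dim (\<Inter>B) - CARD('d)"
  proof (rule AE_finite_allI[OF finFL])
    fix B assume B: "B \<in> ?FL"
    then have fl: "flat n (\<Inter>B)" using flat_Inter ArrH by blast
    show "AE \<omega> in M. dim (\<Inter>B \<inter> ker_A n \<xi> \<omega>) = dim (\<Inter>B) - CARD('d)"
      by (rule flat_ae[OF fl n1 M meas dn LI E1 E2 I1 I2])
  qed
  have "AE \<omega> in M. dim (Rn n \<inter> ker_A n \<xi> \<omega>) = dim (Rn n) - CARD('d) \<and>
     (\<forall>B\<in>?FL. dim (\<Inter>B \<inter> ker_A n \<xi> \<omega>) = dim (\<Inter>B) - CARD('d))"
    using ae0 ae1 by (rule AE_conjI)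
  then show ?thesis
  proof (rule eventually_mono)
    fix \<omega>
    assume H: "dim (Rn n \<inter> ker_A n \<xi> \<omega>) = dim (Rn n) - CARD('d) \<and>
     (\<forall>B\<in>?FL. dim (\<Inter>B \<inter> ker_A n \<xi> \<omega>) = dim (\<Inter>B) - CARD('d))"
    let ?K = "ker_A n \<xi> \<omega>"
    have "Rn n \<inter> ?K = ?K" using ker_sub[of n \<xi> \<omega>] by blast
    then have dK: "dim ?K = n - CARD('d)" using H dim_Rn by simp
    then have c1: "n - vdim ?K = CARD('d)" using dn by (simp add: vdim_eq)
    have gp: "general_position n Arr ?K"
      unfolding general_position_def Let_def
    proof (intro conjI allI impI)
      show "?K \<subseteq> Rn n" by (rule ker_sub)
      show "is_subspace ?K" by (rule ker_is_subspace)
      fix B assume B: "B \<subseteq> Arr \<and> B \<noteq> {}"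
      then have BF: "B \<in> ?FL" by simp
      have eqI: "(\<Inter>H\<in>B. H \<inter> ?K) = \<Inter>B \<inter> ?K" using B by blast
      have fl: "flat n (\<Inter>B)" using flat_Inter ArrH B by blast
      have kn: "dim (\<Inter>B) \<le> n"
      proof -
        interpret flat n "\<Inter>B" by (rule fl)
        have "repL (\<Inter>B) ` NZ (\<Inter>B) \<subseteq> {1..n}" using R_N N_n by blast
        then have "card (repL (\<Inter>B) ` NZ (\<Inter>B)) \<le> card {1..n}" by (intro card_mono) auto
        then show ?thesis using dim_L by simp
      qed
      have "dim (\<Inter>B \<inter> ?K) = dim (\<Inter>B) - CARD('d)" using H BF by blast
      then show "vdim (\<Inter>H\<in>B. H \<inter> ?K) =
          (if arr_rank n B \<le> n - (n - vdim ?K) then n - (n - vdim ?K) - arr_rank n B else 0)"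
        unfolding eqI arr_rank_def vdim_eq dK using kn dn by auto
    qed
    show "n - vdim ?K = CARD('d) \<and> general_position n Arr ?K" using c1 gp by blast
  qed
qed

theorem lemma6p3:
  fixes M :: "'a measure" and \<xi> :: "nat \<Rightarrow> 'a \<Rightarrow> real^'d" and n :: nat
  assumes "prob_space M"
    and "\<forall>i\<in>{1..n}. \<xi> i \<in> borel_measurable M"
  shows
    "(n \<ge> CARD('d) \<and> law_invariant M n \<xi> (\<lambda>_. True) \<and> any_d_indep M n (psum \<xi>)
       \<longrightarrow> (AE \<omega> in M. n - vdim (ker_A n \<xi> \<omega>) = CARD('d)
                        \<and> general_position n (arr_B n) (ker_A n \<xi> \<omega>)))
   \<and> (n \<ge> max 2 CARD('d) \<and> law_invariant M n \<xi> (\<lambda>\<epsilon>. (\<Prod>i\<in>{1..n}. \<epsilon> i) = 1)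
       \<and> any_d_indep M n (psum \<xi>) \<and> any_d_indep M n (psum_star n \<xi>)
       \<longrightarrow> (AE \<omega> in M. n - vdim (ker_A n \<xi> \<omega>) = CARD('d)
                        \<and> general_position n (arr_D n) (ker_A n \<xi> \<omega>)))"
proof (intro conjI impI)
  assume H: "n \<ge> CARD('d) \<and> law_invariant M n \<xi> (\<lambda>_. True) \<and> any_d_indep M n (psum \<xi>)"
  show "AE \<omega> in M. n - vdim (ker_A n \<xi> \<omega>) = CARD('d) \<and> general_position n (arr_B n) (ker_A n \<xi> \<omega>)"
    by (rule main_case[where Dc=False and E="\<lambda>_. True", OF assms(1,2)]) (use H arrB_hyp arrB_fin in auto)
next
  assume H: "n \<ge> max 2 CARD('d) \<and> law_invariant M n \<xi> (\<lambda>\<epsilon>. (\<Prod>i\<in>{1..n}. \<epsilon> i) = 1)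
       \<and> any_d_indep M n (psum \<xi>) \<and> any_d_indep M n (psum_star n \<xi>)"
  have fin: "finite (arr_D n)" using arrD_sub arrB_fin finite_subset by blast
  have hyp: "\<forall>H\<in>arr_D n. hypf n H" using arrD_sub arrB_hyp by blast
  show "AE \<omega> in M. n - vdim (ker_A n \<xi> \<omega>) = CARD('d) \<and> general_position n (arr_D n) (ker_A n \<xi> \<omega>)"
    by (rule main_case[where Dc=True and E="\<lambda>\<epsilon>. (\<Prod>i\<in>{1..n}. \<epsilon> i) = 1", OF assms(1,2)]) (use H hyp fin in auto)
qed


end
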